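(* For any entrywise nonnegative ${\mathbf\Lambda},{\mathbf V}$ and any $\alpha>0$, $$\sqrt{\sum_{\ell\in[\![L]\!],\,s\in[K]}\big(\mathcal U_s(\hat\pi_{{\mathbf\Lambda},{\mathbf V}},\ell)-\epsilon_s\big)_+^2}\le\|\mathbf G_{\hat F,\alpha}({\mathbf\Lambda},{\mathbf V})\|+\big(\mathbb E\|\hat{\mathbf t}(X)-\mathbf t(X)\|^2\big)^{1/2}.$$
   Context: Let $K\ge 2$, $d\ge1$, and let $(X,S,Y)$ be a random triple with values in $\mathbb R^d\times[K]\times\mathbb R$. Put $p_s=\mathbb P(S=s)>0$, $\tau_s(x)=\mathbb P(S=s\mid X=x)$, $t_s(x)=1-\tau_s(x)/p_s$, $\mathbf t=(t_s)_{s\in[K]}$. Fix $B>0$, $L\in\mathbb N$, $\beta>0$, $\boldsymbol\epsilon=(\epsilon_s)\in[0,1]^K$, $[\![L]\!]=\{-L,\dots,L\}$. Let $\hat\eta:\mathbb R^d\to\mathbb R$ and $\hat{\boldsymbol\tau}=(\hat\tau_s)_{s}:\mathbb R^d\to[0,1]^K$ be fixed (deterministic) measurable functions with $\mathbb E[\hat\eta(X)^2]<\infty$; set $\hat t_s(x)=1-\hat\tau_s(x)/p_s$, $\hat{\mathbf t}=(\hat t_s)_s$, $\hat r_\ell(x)=(\hat\eta(x)-\ell B/L)^2$. $\mathrm{LSE}_\beta(\mathbf w)=\beta^{-1}\log\sum_j e^{\beta w_j}$, $\sigma_j(\mathbf w)=e^{w_j}/\sum_ie^{w_i}$. For ${\mathbf\Lambda}=(\lambda_{\ell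 s}),{\mathbf V}=(\nu_{\ell s})$ with rows $\boldsymbol\lambda_\ell,\boldsymbol\nu_\ell\in\mathbb R^K$: $\hat F({\mathbf\Lambda},{\mathbf V})=\mathbb E\big[\mathrm{LSE}_\beta\big((\langle\boldsymbol\lambda_\ell-\boldsymbol\nu_\ell,\hat{\mathbf t}(X)\rangle-\hat r_\ell(X))_{\ell\in[\![L]\!]}\big)\big]+\sum_\ell\langle\boldsymbol\lambda_\ell+\boldsymbol\nu_\ell,\boldsymbol\epsilon\rangle$ and $\hat\pi_{{\mathbf\Lambda},{\mathbf V}}(\ell\mid x)=\sigma_\ell\big(\beta(\langle\boldsymbol\lambda_{\ell'}-\boldsymbol\nu_{\ell'},\hat{\mathbf t}(x)\rangle-\hat r_{\ell'}(x))_{\ell'\in[\![L]\!]}\big)$, a randomized prediction putting mass $\hat\pi_{{\mathbf\Lambda},{\mathbf V}}(\ell\mid x)$ on $\ell B/L$. For such a grid-supported $\pi$, $\mathcal U_s(\pi,\ell)=|\mathbb E[\pi(\ell\mid X)\mid S=s]-\mathbb E[\pi(\ell\mid X)]|$. $(a)_+=\max(a,0)$ entrywise; gradient mapping $\mathbf G_{\hat F,\alpha}({\mathbf\Lambda},{\mathbf V})=\alpha^{-1}[({\mathbf\Lambda},{\mathbf V})-(({\mathbf\Lambda},{\mathbf V})-\alpha\nabla\hat F({\mathbf\Lambda},{\mathbf V}))_+]$; $\|\cdot\|$ is the Euclidean norm. *)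

theory Defs
  imports "HOL-Probability.Probability"
begin

definition grid :: "nat \<Rightarrow> int set" where
  "grid L = {- int L .. int L}"

definition LSE :: "real \<Rightarrow> 'i set \<Rightarrow> ('i \<Rightarrow> real) \<Rightarrow> real" where
  "LSE \<beta> I w = ln (\<Sum>j\<in>I. exp (\<beta> * w j)) / \<beta>"

definition softmax :: "'i set \<Rightarrow> ('i \<Rightarrow> real) \<Rightarrow> 'i \<Rightarrow> real" where
  "softmax I w j = exp (w j) / (\<Sum>i\<in>I. exp (w i))"

definition pS :: "'w measure \<Rightarrow> ('w \<Rightarrow> nat) \<Rightarrow> nat \<Rightarrow> real" where
  "pS M S s = measure M {\<omega> \<in> space M. S \<omega> = s}"

(* tau is a version of x |-> P(S = s | X = x), for s in [K] *)
definition is_cond_prob :: "'w measure \<Rightarrow> ('w \<Rightarrow> 'x::topological_space) \<Rightarrow> ('w \<Rightarrow> nat) \<Rightarrow> nat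
    \<Rightarrow> ('x \<Rightarrow> nat \<Rightarrow> real) \<Rightarrow> bool" where
  "is_cond_prob M X S K \<tau> \<longleftrightarrow>
     (\<forall>s\<in>{1..K}. (\<lambda>x. \<tau> x s) \<in> borel_measurable borel \<and> (\<forall>x. 0 \<le> \<tau> x s \<and> \<tau> x s \<le> 1) \<and>
        (\<forall>A\<in>sets borel. measure M {\<omega> \<in> space M. S \<omega> = s \<and> X \<omega> \<in> A}
                          = (\<integral>\<omega>. \<tau> (X \<omega>) s * indicator A (X \<omega>) \<partial>M)))"

definition tfun :: "(nat \<Rightarrow> real) \<Rightarrow> ('x \<Rightarrow> nat \<Rightarrow> real) \<Rightarrow> 'x \<Rightarrow> nat \<Rightarrow> real" where
  "tfun p \<tau> x s = 1 - \<tau> x s / p s"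

definition score :: "nat \<Rightarrow> real \<Rightarrow> nat \<Rightarrow> ('x \<Rightarrow> real) \<Rightarrow> ('x \<Rightarrow> nat \<Rightarrow> real)
    \<Rightarrow> (int \<Rightarrow> nat \<Rightarrow> real) \<Rightarrow> (int \<Rightarrow> nat \<Rightarrow> real) \<Rightarrow> 'x \<Rightarrow> int \<Rightarrow> real" where
  "score K B L \<eta> th \<Lambda> V x l =
     (\<Sum>s\<in>{1..K}. (\<Lambda> l s - V l s) * th x s) - (\<eta> x - real_of_int l * B / real L)\<^sup>2"

definition Fhat :: "'w measure \<Rightarrow> ('w \<Rightarrow> 'x) \<Rightarrow> nat \<Rightarrow> real \<Rightarrow> nat \<Rightarrow> real \<Rightarrow> (nat \<Rightarrow> real)
    \<Rightarrow> ('x \<Rightarrow> real) \<Rightarrow> ('x \<Rightarrow> nat \<Rightarrow> real)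
    \<Rightarrow> (int \<Rightarrow> nat \<Rightarrow> real) \<Rightarrow> (int \<Rightarrow> nat \<Rightarrow> real) \<Rightarrow> real" where
  "Fhat M X K B L \<beta> \<epsilon> \<eta> th \<Lambda> V =
     (\<integral>\<omega>. LSE \<beta> (grid L) (score K B L \<eta> th \<Lambda> V (X \<omega>)) \<partial>M)
     + (\<Sum>l\<in>grid L. \<Sum>s\<in>{1..K}. (\<Lambda> l s + V l s) * \<epsilon> s)"

definition pihat :: "nat \<Rightarrow> real \<Rightarrow> nat \<Rightarrow> real \<Rightarrow> ('x \<Rightarrow> real) \<Rightarrow> ('x \<Rightarrow> nat \<Rightarrow> real)
    \<Rightarrow> (int \<Rightarrow> nat \<Rightarrow> real) \<Rightarrow> (int \<Rightarrow> nat \<Rightarrow> real) \<Rightarrow> 'x \<Rightarrow> int \<Rightarrow> real" where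
  "pihat K B L \<beta> \<eta> th \<Lambda> V x l =
     softmax (grid L) (\<lambda>l'. \<beta> * score K B L \<eta> th \<Lambda> V x l') l"

definition unfair :: "'w measure \<Rightarrow> ('w \<Rightarrow> 'x) \<Rightarrow> ('w \<Rightarrow> nat) \<Rightarrow> ('x \<Rightarrow> int \<Rightarrow> real)
    \<Rightarrow> nat \<Rightarrow> int \<Rightarrow> real" where
  "unfair M X S \<pi> s l =
     \<bar>(\<integral>\<omega>. \<pi> (X \<omega>) l * indicator {\<omega>' \<in> space M. S \<omega>' = s} \<omega> \<partial>M) / pS M S s
      - (\<integral>\<omega>. \<pi> (X \<omega>) l \<partial>M)\<bar>"

definition upd :: "(int \<Rightarrow> nat \<Rightarrow> real) \<Rightarrow> int \<Rightarrow> nat \<Rightarrow> real \<Rightarrow> int \<Rightarrow> nat \<Rightarrow> real" where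
  "upd A l s h = (\<lambda>l' s'. if l' = l \<and> s' = s then A l' s' + h else A l' s')"

definition gradL :: "((int \<Rightarrow> nat \<Rightarrow> real) \<Rightarrow> (int \<Rightarrow> nat \<Rightarrow> real) \<Rightarrow> real)
    \<Rightarrow> (int \<Rightarrow> nat \<Rightarrow> real) \<Rightarrow> (int \<Rightarrow> nat \<Rightarrow> real) \<Rightarrow> int \<Rightarrow> nat \<Rightarrow> real" where
  "gradL F \<Lambda> V l s = deriv (\<lambda>h. F (upd \<Lambda> l s h) V) 0"

definition gradV :: "((int \<Rightarrow> nat \<Rightarrow> real) \<Rightarrow> (int \<Rightarrow> nat \<Rightarrow> real) \<Rightarrow> real)
    \<Rightarrow> (int \<Rightarrow> nat \<Rightarrow> real) \<Rightarrow> (int \<Rightarrow> nat \<Rightarrow> real) \<Rightarrow> int \<Rightarrow> nat \<Rightarrow> real" where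
  "gradV F \<Lambda> V l s = deriv (\<lambda>h. F \<Lambda> (upd V l s h)) 0"

definition gradmap_norm :: "nat \<Rightarrow> nat \<Rightarrow> ((int \<Rightarrow> nat \<Rightarrow> real) \<Rightarrow> (int \<Rightarrow> nat \<Rightarrow> real) \<Rightarrow> real)
    \<Rightarrow> real \<Rightarrow> (int \<Rightarrow> nat \<Rightarrow> real) \<Rightarrow> (int \<Rightarrow> nat \<Rightarrow> real) \<Rightarrow> real" where
  "gradmap_norm K L F \<alpha> \<Lambda> V = sqrt (\<Sum>l\<in>grid L. \<Sum>s\<in>{1..K}.
      ((\<Lambda> l s - max 0 (\<Lambda> l s - \<alpha> * gradL F \<Lambda> V l s)) / \<alpha>)\<^sup>2
    + ((V l s - max 0 (V l s - \<alpha> * gradV F \<Lambda> V l s)) / \<alpha>)\<^sup>2)"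

end

theory Submission
  imports Defs
begin

lemma exp_quad:
  fixes y :: real assumes "\<bar>y\<bar> \<le> 1" shows "exp y - 1 - y \<le> y\<^sup>2"
proof (cases "y \<ge> 0")
  case True then show ?thesis using exp_bound[of y] assms by simp
next
  case False
  define u where "u = -y"
  have u: "0 \<le> u" "u \<le> 1" using False assms by (auto simp: u_def)
  have e1: "exp u \<ge> 1 + u" using exp_ge_add_one_self[of u] by simp
  have "1 - u + u\<^sup>2 = (u - 1/2)\<^sup>2 + 3/4" by (simp add: power2_eq_square algebra_simps)
  moreover have "(u - 1/2)\<^sup>2 \<ge> 0" by simp
  ultimately have pos: "1 - u + u\<^sup>2 > 0" by linarith
  have "exp u * (1 - u + u\<^sup>2) \<ge> (1 + u) * (1 - u + u\<^sup>2)"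
    using e1 pos by (intro mult_right_mono) auto
  also have "(1 + u) * (1 - u + u\<^sup>2) = 1 + u^3" by (simp add: algebra_simps power2_eq_square power3_eq_cube)
  finally have "exp u * (1 - u + u\<^sup>2) \<ge> 1" using u by (smt (verit) zero_le_power)
  hence "exp (-u) \<le> 1 - u + u\<^sup>2"
    by (simp add: exp_minus field_simps)
  then show ?thesis by (simp add: u_def)
qed

lemma ln_mix_bounds:
  fixes p y :: real assumes "0 \<le> p" "p \<le> 1"
  shows "1 + p*(exp y - 1) > 0" "p*y \<le> ln (1 + p*(exp y - 1))" "ln (1 + p*(exp y - 1)) \<le> p*(exp y - 1)"
proof -
  have eq: "1 + p*(exp y - 1) = (1-p) + p * exp y" by (simp add: algebra_simps)
  show pos: "1 + p*(exp y - 1) > 0"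
  proof (cases "p = 1")
    case True then show ?thesis by simp
  next
    case False then have "1 - p > 0" using assms by simp
    moreover have "p * exp y \<ge> 0" using assms by simp
    ultimately show ?thesis unfolding eq by linarith
  qed
  have "exp ((1 - p) *\<^sub>R 0 + p *\<^sub>R y) \<le> (1 - p) * exp 0 + p * exp y"
    using assms by (intro convex_onD[OF exp_convex]) auto
  hence "exp (p*y) \<le> 1 + p*(exp y - 1)" by (simp add: algebra_simps)
  thus "p*y \<le> ln (1 + p*(exp y - 1))" using pos by (metis ln_exp ln_le_cancel_iff exp_gt_zero)
  show "ln (1 + p*(exp y - 1)) \<le> p*(exp y - 1)" using ln_le_minus_one[OF pos] by simp
qed

lemma ln_mix_quad:
  fixes p y :: real assumes "0 \<le> p" "p \<le> 1" "\<bar>y\<bar> \<le> 1"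
  shows "\<bar>ln (1 + p*(exp y - 1)) - p*y\<bar> \<le> y\<^sup>2"
proof -
  have "p*(exp y - 1) - p*y = p * (exp y - 1 - y)" by (simp add: algebra_simps)
  also have "\<dots> \<le> 1 * (exp y - 1 - y)"
  proof -
    have "exp y - 1 - y \<ge> 0" using exp_ge_add_one_self[of y] by linarith
    thus ?thesis using assms by (intro mult_right_mono) auto
  qed
  also have "\<dots> \<le> y\<^sup>2" using exp_quad[OF assms(3)] by simp
  finally show ?thesis using ln_mix_bounds[OF assms(1,2), of y] by linarith
qed

lemma ln_mix_abs:
  fixes p y :: real assumes "0 \<le> p" "p \<le> 1"
  shows "\<bar>ln (1 + p*(exp y - 1))\<bar> \<le> \<bar>y\<bar> + exp \<bar>y\<bar>"
proof -
  have "p*y \<ge> -\<bar>y\<bar>" using assms by (smt (verit) abs_ge_self mult_left_le_one_le mult_minus_left abs_mult mult_le_cancel_right1 abs_le_D1 mult_nonneg_nonneg)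
  moreover have "p*(exp y - 1) \<le> exp \<bar>y\<bar>"
  proof -
    have "p*(exp y - 1) \<le> p * exp y" using assms by (simp add: mult_left_mono)
    also have "\<dots> \<le> exp y" using assms by (simp add: mult_left_le_one_le)
    also have "\<dots> \<le> exp \<bar>y\<bar>" by simp
    finally show ?thesis .
  qed
  ultimately show ?thesis using ln_mix_bounds[OF assms, of y] by (smt (verit) exp_ge_zero)
qed

lemma softmax_nonneg: "0 \<le> softmax I w j"
  unfolding softmax_def by (simp add: sum_nonneg)

lemma softmax_sum: assumes "finite I" "I \<noteq> {}" shows "(\<Sum>j\<in>I. softmax I w j) = 1"
proof -
  have "(\<Sum>i\<in>I. exp (w i)) > 0" using assms by (intro sum_pos) auto
  thus ?thesis unfolding softmax_def by (simp add: sum_divide_distrib[symmetric])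
qed

lemma softmax_le1: assumes "finite I" "j \<in> I" shows "softmax I w j \<le> 1"
proof -
  have "exp (w j) \<le> (\<Sum>i\<in>I. exp (w i))" using assms by (intro member_le_sum) auto
  moreover have "(\<Sum>i\<in>I. exp (w i)) > 0" using assms by (intro sum_pos) auto
  ultimately show ?thesis unfolding softmax_def by simp
qed

lemma LSE_shift:
  fixes w :: "'i \<Rightarrow> real"
  assumes "finite I" "l \<in> I" "\<beta> > 0"
  shows "LSE \<beta> I (\<lambda>j. w j + (if j = l then d else 0))
       = LSE \<beta> I w + ln (1 + softmax I (\<lambda>j. \<beta> * w j) l * (exp (\<beta> * d) - 1)) / \<beta>"
proof -
  define Z where "Z = (\<Sum>j\<in>I. exp (\<beta> * w j))"
  have Zpos: "Z > 0" unfolding Z_def using assms by (intro sum_pos) auto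
  have "(\<Sum>j\<in>I. exp (\<beta> * (w j + (if j = l then d else 0))))
      = (\<Sum>j\<in>I. exp (\<beta> * w j) + (if j = l then exp (\<beta> * w l) * (exp (\<beta> * d) - 1) else 0))"
    by (intro sum.cong) (auto simp: distrib_left exp_add algebra_simps)
  also have "\<dots> = Z + exp (\<beta> * w l) * (exp (\<beta> * d) - 1)"
    using assms by (simp add: sum.distrib Z_def)
  also have "\<dots> = Z * (1 + softmax I (\<lambda>j. \<beta> * w j) l * (exp (\<beta> * d) - 1))"
    using Zpos by (simp add: softmax_def Z_def[symmetric] field_simps)
  finally have eq: "(\<Sum>j\<in>I. exp (\<beta> * (w j + (if j = l then d else 0))))
      = Z * (1 + softmax I (\<lambda>j. \<beta> * w j) l * (exp (\<beta> * d) - 1))" .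
  have Qpos: "1 + softmax I (\<lambda>j. \<beta> * w j) l * (exp (\<beta> * d) - 1) > 0"
    by (rule ln_mix_bounds(1)) (auto simp: softmax_nonneg softmax_le1 assms)
  show ?thesis unfolding LSE_def eq using Zpos Qpos
    by (simp add: ln_mult Z_def add_divide_distrib)
qed

lemma LSE_abs:
  fixes w :: "'i \<Rightarrow> real"
  assumes "finite I" "I \<noteq> {}" "\<beta> > 0"
  shows "\<bar>LSE \<beta> I w\<bar> \<le> (\<Sum>j\<in>I. \<bar>w j\<bar>) + ln (real (card I)) / \<beta>"
proof -
  define Z where "Z = (\<Sum>j\<in>I. exp (\<beta> * w j))"
  define A where "A = (\<Sum>j\<in>I. \<bar>w j\<bar>)"
  obtain j0 where j0: "j0 \<in> I" using assms by auto
  have Zpos: "Z > 0" unfolding Z_def using assms by (intro sum_pos) auto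
  have wA: "\<bar>w j\<bar> \<le> A" if "j \<in> I" for j
    unfolding A_def using assms that by (intro member_le_sum) auto
  have "exp (\<beta> * w j0) \<le> Z" unfolding Z_def using assms j0 by (intro member_le_sum) auto
  hence "ln (exp (\<beta> * w j0)) \<le> ln Z" using Zpos by (subst ln_le_cancel_iff) auto
  hence "\<beta> * w j0 \<le> ln Z" by simp
  hence lo: "w j0 \<le> ln Z / \<beta>" using assms by (simp add: field_simps mult.commute)
  have "Z \<le> (\<Sum>j\<in>I. exp (\<beta> * A))" unfolding Z_def
  proof (intro sum_mono)
    fix j assume "j \<in> I"
    hence "\<beta> * w j \<le> \<beta> * A" using wA[of j] assms by (intro mult_left_mono) auto
    thus "exp (\<beta> * w j) \<le> exp (\<beta> * A)" by simp
  qed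
  also have "\<dots> = real (card I) * exp (\<beta> * A)" by simp
  finally have "ln Z \<le> ln (real (card I) * exp (\<beta> * A))"
    using Zpos assms by (subst ln_le_cancel_iff) (auto simp: card_gt_0_iff)
  also have "\<dots> = ln (real (card I)) + \<beta> * A" using assms by (simp add: ln_mult card_gt_0_iff)
  finally have "ln Z \<le> ln (real (card I)) + \<beta> * A" .
  hence hi: "ln Z / \<beta> \<le> ln (real (card I)) / \<beta> + A" using assms by (simp add: field_simps)
  have c: "ln (real (card I)) \<ge> 0" using assms by (simp add: Suc_leI card_gt_0_iff)
  have "ln (real (card I)) / \<beta> \<ge> 0" using c assms by simp
  moreover have "- A \<le> w j0" using wA[OF j0] by linarith
  ultimately show ?thesis using lo hi unfolding LSE_def Z_def[symmetric] A_def[symmetric] by linarith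
qed

lemma cond_prob_integral:
  fixes X :: "'w \<Rightarrow> 'x::euclidean_space" and g :: "'x \<Rightarrow> real"
  assumes P: "prob_space M"
    and Xm[measurable]: "X \<in> borel_measurable M"
    and Sm[measurable]: "S \<in> measurable M (count_space UNIV)"
    and cp: "is_cond_prob M X S K \<tau>" and s: "s \<in> {1..K}"
    and gm[measurable]: "g \<in> borel_measurable borel"
  shows "(\<integral>\<omega>. g (X \<omega>) * \<tau> (X \<omega>) s \<partial>M)
       = (\<integral>\<omega>. g (X \<omega>) * indicator {\<omega>' \<in> space M. S \<omega>' = s} \<omega> \<partial>M)"
proof -
  interpret prob_space M by (rule P)
  define A0 where "A0 = {\<omega>' \<in> space M. S \<omega>' = s}"
  have A0m[measurable]: "A0 \<in> sets M" unfolding A0_def by measurable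
  have \<tau>m[measurable]: "(\<lambda>x. \<tau> x s) \<in> borel_measurable borel"
    and \<tau>b: "\<And>x. 0 \<le> \<tau> x s \<and> \<tau> x s \<le> 1"
    and \<tau>eq: "\<And>A. A \<in> sets borel \<Longrightarrow> measure M {\<omega> \<in> space M. S \<omega> = s \<and> X \<omega> \<in> A}
                          = (\<integral>\<omega>. \<tau> (X \<omega>) s * indicator A (X \<omega>) \<partial>M)"
    using cp s unfolding is_cond_prob_def by auto
  define N1 where "N1 = density (distr M borel X) (\<lambda>x. ennreal (\<tau> x s))"
  define N2 where "N2 = distr (density M (\<lambda>\<omega>. ennreal (indicator A0 \<omega>))) borel X"
  have "N1 = N2"
  proof (rule measure_eqI)
    show "sets N1 = sets N2" unfolding N1_def N2_def by simp
  next
    fix A assume "A \<in> sets N1"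
    hence A[measurable]: "A \<in> sets borel" unfolding N1_def by simp
    have int: "integrable M (\<lambda>\<omega>. \<tau> (X \<omega>) s * indicator A (X \<omega>))"
      by (rule integrable_const_bound[where B=1]) (auto simp: \<tau>b indicator_def abs_le_iff)
    have "emeasure N1 A = (\<integral>\<^sup>+ x. ennreal (\<tau> x s) * indicator A x \<partial>distr M borel X)"
      unfolding N1_def by (simp add: emeasure_density)
    also have "\<dots> = (\<integral>\<^sup>+ \<omega>. ennreal (\<tau> (X \<omega>) s) * indicator A (X \<omega>) \<partial>M)"
      by (simp add: nn_integral_distr)
    also have "\<dots> = (\<integral>\<^sup>+ \<omega>. ennreal (\<tau> (X \<omega>) s * indicator A (X \<omega>)) \<partial>M)"
      by (intro nn_integral_cong) (auto simp: indicator_def)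
    also have "\<dots> = ennreal (\<integral>\<omega>. \<tau> (X \<omega>) s * indicator A (X \<omega>) \<partial>M)"
      by (rule nn_integral_eq_integral[OF int]) (auto simp: \<tau>b)
    also have "\<dots> = ennreal (measure M {\<omega> \<in> space M. S \<omega> = s \<and> X \<omega> \<in> A})"
      using \<tau>eq[OF A] by simp
    also have "\<dots> = emeasure M {\<omega> \<in> space M. S \<omega> = s \<and> X \<omega> \<in> A}"
      by (simp add: emeasure_eq_measure)
    also have "\<dots> = emeasure M (A0 \<inter> (X -` A \<inter> space M))"
      unfolding A0_def by (intro arg_cong[where f="emeasure M"]) auto
    also have "\<dots> = (\<integral>\<^sup>+ \<omega>. indicator (A0 \<inter> (X -` A \<inter> space M)) \<omega> \<partial>M)"
      by (rule nn_integral_indicator[symmetric]) measurable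
    also have "\<dots> = (\<integral>\<^sup>+ \<omega>. ennreal (indicator A0 \<omega>) * indicator (X -` A \<inter> space M) \<omega> \<partial>M)"
      by (intro nn_integral_cong) (auto simp: indicator_def)
    also have "\<dots> = emeasure (density M (\<lambda>\<omega>. ennreal (indicator A0 \<omega>))) (X -` A \<inter> space M)"
      by (simp add: emeasure_density)
    also have "\<dots> = emeasure N2 A"
      unfolding N2_def by (simp add: emeasure_distr)
    finally show "emeasure N1 A = emeasure N2 A" .
  qed
  have "(\<integral>x. g x \<partial>N1) = (\<integral>\<omega>. g (X \<omega>) * \<tau> (X \<omega>) s \<partial>M)"
    unfolding N1_def by (subst integral_density) (auto simp: \<tau>b integral_distr mult.commute)
  moreover have "(\<integral>x. g x \<partial>N2) = (\<integral>\<omega>. g (X \<omega>) * indicator A0 \<omega> \<partial>M)"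
    unfolding N2_def by (subst integral_distr) (auto simp: integral_density mult.commute)
  ultimately show ?thesis using \<open>N1 = N2\<close> unfolding A0_def by simp
qed

lemma deriv_int_lse:
  fixes M :: "'w measure" and w :: "'w \<Rightarrow> 'i \<Rightarrow> real" and c :: "'w \<Rightarrow> real"
  assumes P: "prob_space M" and I: "finite I" "l \<in> I" and \<beta>: "\<beta> > 0"
    and Pm[measurable]: "(\<lambda>\<omega>. softmax I (\<lambda>j. \<beta> * w \<omega> j) l) \<in> borel_measurable M"
    and cm[measurable]: "c \<in> borel_measurable M" and cb: "\<And>\<omega>. \<bar>c \<omega>\<bar> \<le> C"
    and int0: "integrable M (\<lambda>\<omega>. LSE \<beta> I (w \<omega>))"
  shows "((\<lambda>h. \<integral>\<omega>. LSE \<beta> I (\<lambda>j. w \<omega> j + (if j = l then h * c \<omega> else 0)) \<partial>M)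
          has_real_derivative (\<integral>\<omega>. softmax I (\<lambda>j. \<beta> * w \<omega> j) l * c \<omega> \<partial>M)) (at 0)"
proof -
  interpret prob_space M by (rule P)
  define p where "p \<omega> = softmax I (\<lambda>j. \<beta> * w \<omega> j) l" for \<omega>
  have pm[measurable]: "p \<in> borel_measurable M" unfolding p_def by (rule Pm)
  have pb: "0 \<le> p \<omega>" "p \<omega> \<le> 1" for \<omega> unfolding p_def using I by (auto simp: softmax_nonneg softmax_le1)
  define Dh where "Dh h \<omega> = ln (1 + p \<omega> * (exp (\<beta> * (h * c \<omega>)) - 1)) / \<beta>" for h \<omega>
  define F where "F h = (\<integral>\<omega>. LSE \<beta> I (\<lambda>j. w \<omega> j + (if j = l then h * c \<omega> else 0)) \<partial>M)" for h
  define A where "A = (\<integral>\<omega>. p \<omega> * c \<omega> \<partial>M)"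
  define C' where "C' = \<bar>C\<bar> + 1"
  have C'pos: "C' > 0" unfolding C'_def by simp
  have cb': "\<bar>c \<omega>\<bar> \<le> C'" for \<omega> using cb[of \<omega>] unfolding C'_def by simp
  have Dm[measurable]: "Dh h \<in> borel_measurable M" for h unfolding Dh_def by measurable
  have Dint: "integrable M (Dh h)" for h
  proof (rule integrable_const_bound[where B="(\<beta> * \<bar>h\<bar> * C' + exp (\<beta> * \<bar>h\<bar> * C')) / \<beta>"])
    show "AE x in M. norm (Dh h x) \<le> (\<beta> * \<bar>h\<bar> * C' + exp (\<beta> * \<bar>h\<bar> * C')) / \<beta>"
    proof (intro AE_I2)
      fix \<omega>
      have yb: "\<bar>\<beta> * (h * c \<omega>)\<bar> \<le> \<beta> * \<bar>h\<bar> * C'"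
        using \<beta> cb'[of \<omega>] by (simp add: abs_mult mult_left_mono)
      have "\<bar>ln (1 + p \<omega> * (exp (\<beta> * (h * c \<omega>)) - 1))\<bar> \<le> \<bar>\<beta> * (h * c \<omega>)\<bar> + exp \<bar>\<beta> * (h * c \<omega>)\<bar>"
        by (rule ln_mix_abs) (auto simp: pb)
      also have "\<dots> \<le> \<beta> * \<bar>h\<bar> * C' + exp (\<beta> * \<bar>h\<bar> * C')" using yb by (intro add_mono) simp_all
      finally show "norm (Dh h \<omega>) \<le> (\<beta> * \<bar>h\<bar> * C' + exp (\<beta> * \<bar>h\<bar> * C')) / \<beta>"
        unfolding Dh_def using \<beta> by (simp add: divide_right_mono abs_div)
    qed
  qed simp
  have Feq: "F h = (\<integral>\<omega>. LSE \<beta> I (w \<omega>) \<partial>M) + (\<integral>\<omega>. Dh h \<omega> \<partial>M)" for h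
  proof -
    have "F h = (\<integral>\<omega>. LSE \<beta> I (w \<omega>) + Dh h \<omega> \<partial>M)"
      unfolding F_def Dh_def p_def by (rule Bochner_Integration.integral_cong[OF refl]) (rule LSE_shift[OF I \<beta>])
    also have "\<dots> = (\<integral>\<omega>. LSE \<beta> I (w \<omega>) \<partial>M) + (\<integral>\<omega>. Dh h \<omega> \<partial>M)"
      by (rule Bochner_Integration.integral_add[OF int0 Dint])
    finally show ?thesis .
  qed
  have D0: "Dh 0 \<omega> = 0" for \<omega> unfolding Dh_def by simp
  have pcint: "integrable M (\<lambda>\<omega>. p \<omega> * c \<omega>)"
  proof (rule integrable_const_bound[where B=C'])
    have "p \<omega> * \<bar>c \<omega>\<bar> \<le> 1 * C'" for \<omega> by (intro mult_mono) (auto simp: pb cb' C'pos less_imp_le)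
    thus "AE x in M. norm (p x * c x) \<le> C'" by (auto simp: abs_mult pb)
  qed simp
  have key: "\<bar>(F h - F 0) / (h - 0) - A\<bar> \<le> \<beta> * C'\<^sup>2 * \<bar>h\<bar>" if h: "h \<noteq> 0" "\<bar>h\<bar> < 1 / (\<beta> * C')" for h
  proof -
    have bnd: "\<bar>Dh h \<omega> - h * (p \<omega> * c \<omega>)\<bar> \<le> \<beta> * C'\<^sup>2 * h\<^sup>2" for \<omega>
    proof -
      have "\<bar>\<beta> * (h * c \<omega>)\<bar> \<le> \<beta> * (\<bar>h\<bar> * C')"
        using \<beta> cb'[of \<omega>] by (simp add: abs_mult mult_left_mono)
      also have "\<dots> \<le> 1" using h \<beta> C'pos by (simp add: field_simps)
      finally have y1: "\<bar>\<beta> * (h * c \<omega>)\<bar> \<le> 1" .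
      have "\<bar>ln (1 + p \<omega> * (exp (\<beta> * (h * c \<omega>)) - 1)) - p \<omega> * (\<beta> * (h * c \<omega>))\<bar> \<le> (\<beta> * (h * c \<omega>))\<^sup>2"
        by (rule ln_mix_quad) (auto simp: pb y1)
      moreover have "Dh h \<omega> - h * (p \<omega> * c \<omega>) = (ln (1 + p \<omega> * (exp (\<beta> * (h * c \<omega>)) - 1)) - p \<omega> * (\<beta> * (h * c \<omega>))) / \<beta>"
        unfolding Dh_def using \<beta> by (simp add: field_simps)
      ultimately have "\<bar>Dh h \<omega> - h * (p \<omega> * c \<omega>)\<bar> \<le> (\<beta> * (h * c \<omega>))\<^sup>2 / \<beta>"
        using \<beta> by (simp add: abs_div divide_right_mono)
      also have "\<dots> = \<beta> * h\<^sup>2 * (c \<omega>)\<^sup>2" using \<beta> by (simp add: power2_eq_square)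
      also have "\<dots> \<le> \<beta> * h\<^sup>2 * C'\<^sup>2"
        using \<beta> cb'[of \<omega>] by (intro mult_left_mono) (auto simp: abs_le_square_iff[symmetric] power2_le_iff_abs_le C'pos)
      finally show ?thesis by (simp add: algebra_simps)
    qed
    have "\<bar>(\<integral>\<omega>. Dh h \<omega> \<partial>M) - h * A\<bar> = \<bar>\<integral>\<omega>. Dh h \<omega> - h * (p \<omega> * c \<omega>) \<partial>M\<bar>"
      unfolding A_def using Dint pcint by simp
    also have "\<dots> \<le> (\<integral>\<omega>. \<bar>Dh h \<omega> - h * (p \<omega> * c \<omega>)\<bar> \<partial>M)"
      by (rule integral_abs_bound)
    also have "\<dots> \<le> (\<integral>\<omega>. \<beta> * C'\<^sup>2 * h\<^sup>2 \<partial>M)"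
      using Dint pcint by (intro integral_mono) (auto simp: bnd)
    also have "\<dots> = \<beta> * C'\<^sup>2 * h\<^sup>2" by (simp add: prob_space)
    finally have "\<bar>(\<integral>\<omega>. Dh h \<omega> \<partial>M) - h * A\<bar> \<le> \<beta> * C'\<^sup>2 * h\<^sup>2" .
    moreover have "(F h - F 0) / (h - 0) - A = ((\<integral>\<omega>. Dh h \<omega> \<partial>M) - h * A) / h"
      using h by (simp add: Feq D0 field_simps)
    ultimately show ?thesis using h
      by (simp add: abs_div divide_le_eq power2_eq_square abs_mult mult.assoc mult.left_commute)
  qed
  have "((\<lambda>h. (F h - F 0) / (h - 0)) \<longlongrightarrow> A) (at 0)"
  proof -
    have ev: "eventually (\<lambda>h. norm ((F h - F 0) / (h - 0) - A) \<le> \<beta> * C'\<^sup>2 * \<bar>h\<bar>) (at (0::real))"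
      unfolding eventually_at using \<beta> C'pos
      by (intro exI[of _ "1 / (\<beta> * C')"]) (auto intro!: key[simplified] simp: dist_real_def)
    have "((\<lambda>h::real. \<beta> * C'\<^sup>2 * \<bar>h\<bar>) \<longlongrightarrow> \<beta> * C'\<^sup>2 * \<bar>0\<bar>) (at 0)"
      by (intro tendsto_intros)
    hence "((\<lambda>h::real. \<beta> * C'\<^sup>2 * \<bar>h\<bar>) \<longlongrightarrow> 0) (at 0)" by simp
    from Lim_null_comparison[OF ev this] show ?thesis by (simp add: Lim_null[symmetric])
  qed
  hence "(F has_field_derivative A) (at 0)" by (simp add: has_field_derivative_iff)
  thus ?thesis unfolding F_def A_def p_def .
qed

lemma gm_scalar:
  fixes a e \<alpha> lam nu :: real
  assumes "\<alpha> > 0" "lam \<ge> 0" "nu \<ge> 0"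
  shows "(max 0 (\<bar>a\<bar> - e))\<^sup>2 \<le> ((lam - max 0 (lam - \<alpha> * (e + a))) / \<alpha>)\<^sup>2
                              + ((nu - max 0 (nu - \<alpha> * (e - a))) / \<alpha>)\<^sup>2"
proof (cases "\<bar>a\<bar> \<le> e")
  case True then show ?thesis by (simp add: add_nonneg_nonneg)
next
  case False
  show ?thesis
  proof (cases "a \<ge> 0")
    case True
    hence "e - a < 0" using False by simp
    hence "nu - \<alpha> * (e - a) > nu" using assms by (simp add: mult_pos_neg)
    hence "max 0 (nu - \<alpha> * (e - a)) = nu - \<alpha> * (e - a)" using assms by simp
    hence q: "(nu - max 0 (nu - \<alpha> * (e - a))) / \<alpha> = e - a" using assms by simp
    have m: "max 0 (\<bar>a\<bar> - e) = a - e" using True False by simp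
    have "(max 0 (\<bar>a\<bar> - e))\<^sup>2 = ((nu - max 0 (nu - \<alpha> * (e - a))) / \<alpha>)\<^sup>2"
      unfolding q m by (rule power2_commute)
    then show ?thesis using zero_le_power2[of "(lam - max 0 (lam - \<alpha> * (e + a))) / \<alpha>"] by linarith
  next
    case neg: False
    hence "e + a < 0" using False by simp
    hence "lam - \<alpha> * (e + a) > lam" using assms by (simp add: mult_pos_neg)
    hence "max 0 (lam - \<alpha> * (e + a)) = lam - \<alpha> * (e + a)" using assms by simp
    hence q: "(lam - max 0 (lam - \<alpha> * (e + a))) / \<alpha> = e + a" using assms by simp
    have m: "max 0 (\<bar>a\<bar> - e) = - (e + a)" using neg False by simp
    have "(max 0 (\<bar>a\<bar> - e))\<^sup>2 = ((lam - max 0 (lam - \<alpha> * (e + a))) / \<alpha>)\<^sup>2"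
      unfolding q m by (rule power2_minus)
    then show ?thesis using zero_le_power2[of "(nu - max 0 (nu - \<alpha> * (e - a))) / \<alpha>"] by linarith
  qed
qed

lemma max_shift: fixes a b e :: real
  shows "max 0 (\<bar>b\<bar> - e) \<le> max 0 (\<bar>a\<bar> - e) + \<bar>a - b\<bar>"
  by linarith

lemma (in prob_space) sq_int_le:
  fixes Z :: "'a \<Rightarrow> real"
  assumes "integrable M Z" "integrable M (\<lambda>x. (Z x)\<^sup>2)"
  shows "(\<integral>x. Z x \<partial>M)\<^sup>2 \<le> (\<integral>x. (Z x)\<^sup>2 \<partial>M)"
  using variance_eq[OF assms] variance_positive[of Z] by simp

lemma L2_double:
  fixes f g h :: "'a \<Rightarrow> 'b \<Rightarrow> real"
  assumes "finite A" "finite B"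
    and "\<And>a b. a \<in> A \<Longrightarrow> b \<in> B \<Longrightarrow> 0 \<le> f a b \<and> f a b \<le> g a b + h a b"
    and "\<And>a b. a \<in> A \<Longrightarrow> b \<in> B \<Longrightarrow> 0 \<le> g a b"
    and "\<And>a b. a \<in> A \<Longrightarrow> b \<in> B \<Longrightarrow> 0 \<le> h a b"
  shows "sqrt (\<Sum>a\<in>A. \<Sum>b\<in>B. (f a b)\<^sup>2) \<le> sqrt (\<Sum>a\<in>A. \<Sum>b\<in>B. (g a b)\<^sup>2) + sqrt (\<Sum>a\<in>A. \<Sum>b\<in>B. (h a b)\<^sup>2)"
proof -
  have eq: "(\<Sum>a\<in>A. \<Sum>b\<in>B. (k a b)\<^sup>2) = (\<Sum>x\<in>A \<times> B. (case_prod k x)\<^sup>2)" for k :: "'a \<Rightarrow> 'b \<Rightarrow> real"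
    by (simp add: sum.cartesian_product split_def)
  have "sqrt (\<Sum>x\<in>A \<times> B. (case_prod f x)\<^sup>2) \<le> sqrt (\<Sum>x\<in>A \<times> B. (case_prod g x + case_prod h x)\<^sup>2)"
    using assms by (intro real_sqrt_le_mono sum_mono power_mono) auto
  also have "\<dots> = L2_set (\<lambda>x. case_prod g x + case_prod h x) (A \<times> B)" by (simp add: L2_set_def)
  also have "\<dots> \<le> L2_set (case_prod g) (A \<times> B) + L2_set (case_prod h) (A \<times> B)"
    by (rule L2_set_triangle_ineq)
  finally show ?thesis unfolding eq by (simp add: L2_set_def)
qed

lemma upd_sum_L:
  fixes t :: "nat \<Rightarrow> real"
  assumes "finite A" "s \<in> A"
  shows "(\<Sum>s'\<in>A. (upd \<Lambda> l s h j s' - V j s') * t s')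
       = (\<Sum>s'\<in>A. (\<Lambda> j s' - V j s') * t s') + (if j = l then h * t s else 0)"
proof -
  have "(\<Sum>s'\<in>A. (upd \<Lambda> l s h j s' - V j s') * t s')
      = (\<Sum>s'\<in>A. (\<Lambda> j s' - V j s') * t s' + (if s' = s then (if j = l then h * t s' else 0) else 0))"
    by (intro sum.cong) (auto simp: upd_def algebra_simps)
  also have "\<dots> = (\<Sum>s'\<in>A. (\<Lambda> j s' - V j s') * t s') + (if j = l then h * t s else 0)"
    using assms by (simp add: sum.distrib)
  finally show ?thesis .
qed

lemma upd_sum_V:
  fixes t :: "nat \<Rightarrow> real"
  assumes "finite A" "s \<in> A"
  shows "(\<Sum>s'\<in>A. (\<Lambda> j s' - upd V l s h j s') * t s')
       = (\<Sum>s'\<in>A. (\<Lambda> j s' - V j s') * t s') + (if j = l then h * (- t s) else 0)"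
proof -
  have "(\<Sum>s'\<in>A. (\<Lambda> j s' - upd V l s h j s') * t s')
      = (\<Sum>s'\<in>A. (\<Lambda> j s' - V j s') * t s' + (if s' = s then (if j = l then h * (- t s') else 0) else 0))"
    by (intro sum.cong) (auto simp: upd_def algebra_simps)
  also have "\<dots> = (\<Sum>s'\<in>A. (\<Lambda> j s' - V j s') * t s') + (if j = l then h * (- t s) else 0)"
    using assms by (simp add: sum.distrib)
  finally show ?thesis .
qed

lemma delta2:
  fixes c :: real
  assumes "finite G" "finite A" "l \<in> G" "s \<in> A"
  shows "(\<Sum>l'\<in>G. \<Sum>s'\<in>A. (if l' = l \<and> s' = s then c else 0)) = c"
proof -
  have "(\<Sum>l'\<in>G. \<Sum>s'\<in>A. (if l' = l \<and> s' = s then c else 0)) = (\<Sum>l'\<in>G. if l' = l then c else 0)"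
    using assms by (intro sum.cong) auto
  also have "\<dots> = c" using assms by simp
  finally show ?thesis .
qed

lemma upd_eps_L:
  fixes \<epsilon> :: "nat \<Rightarrow> real"
  assumes "finite G" "finite A" "l \<in> G" "s \<in> A"
  shows "(\<Sum>l'\<in>G. \<Sum>s'\<in>A. (upd \<Lambda> l s h l' s' + V l' s') * \<epsilon> s')
       = (\<Sum>l'\<in>G. \<Sum>s'\<in>A. (\<Lambda> l' s' + V l' s') * \<epsilon> s') + h * \<epsilon> s"
proof -
  have "(\<Sum>l'\<in>G. \<Sum>s'\<in>A. (upd \<Lambda> l s h l' s' + V l' s') * \<epsilon> s')
     = (\<Sum>l'\<in>G. \<Sum>s'\<in>A. (\<Lambda> l' s' + V l' s') * \<epsilon> s' + (if l' = l \<and> s' = s then h * \<epsilon> s else 0))"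
    by (intro sum.cong refl) (auto simp: upd_def algebra_simps)
  also have "\<dots> = (\<Sum>l'\<in>G. \<Sum>s'\<in>A. (\<Lambda> l' s' + V l' s') * \<epsilon> s') + (\<Sum>l'\<in>G. \<Sum>s'\<in>A. (if l' = l \<and> s' = s then h * \<epsilon> s else 0))"
    by (simp add: sum.distrib)
  also have "\<dots> = (\<Sum>l'\<in>G. \<Sum>s'\<in>A. (\<Lambda> l' s' + V l' s') * \<epsilon> s') + h * \<epsilon> s"
    using delta2[OF assms] by simp
  finally show ?thesis .
qed

lemma upd_eps_V:
  fixes \<epsilon> :: "nat \<Rightarrow> real"
  assumes "finite G" "finite A" "l \<in> G" "s \<in> A"
  shows "(\<Sum>l'\<in>G. \<Sum>s'\<in>A. (\<Lambda> l' s' + upd V l s h l' s') * \<epsilon> s')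
       = (\<Sum>l'\<in>G. \<Sum>s'\<in>A. (\<Lambda> l' s' + V l' s') * \<epsilon> s') + h * \<epsilon> s"
proof -
  have "(\<Sum>l'\<in>G. \<Sum>s'\<in>A. (\<Lambda> l' s' + upd V l s h l' s') * \<epsilon> s')
     = (\<Sum>l'\<in>G. \<Sum>s'\<in>A. (\<Lambda> l' s' + V l' s') * \<epsilon> s' + (if l' = l \<and> s' = s then h * \<epsilon> s else 0))"
    by (intro sum.cong refl) (auto simp: upd_def algebra_simps)
  also have "\<dots> = (\<Sum>l'\<in>G. \<Sum>s'\<in>A. (\<Lambda> l' s' + V l' s') * \<epsilon> s') + (\<Sum>l'\<in>G. \<Sum>s'\<in>A. (if l' = l \<and> s' = s then h * \<epsilon> s else 0))"
    by (simp add: sum.distrib)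
  also have "\<dots> = (\<Sum>l'\<in>G. \<Sum>s'\<in>A. (\<Lambda> l' s' + V l' s') * \<epsilon> s') + h * \<epsilon> s"
    using delta2[OF assms] by simp
  finally show ?thesis .
qed

theorem lemma5p1:
  fixes M :: "'w measure"
    and X :: "'w \<Rightarrow> 'x::euclidean_space" and S :: "'w \<Rightarrow> nat" and Y :: "'w \<Rightarrow> real"
    and K L :: nat and B \<beta> \<alpha> :: real and \<epsilon> :: "nat \<Rightarrow> real"
    and \<tau> \<tau>h :: "'x \<Rightarrow> nat \<Rightarrow> real" and \<eta>h :: "'x \<Rightarrow> real"
    and \<Lambda> V :: "int \<Rightarrow> nat \<Rightarrow> real"
  assumes "prob_space M"
    and "X \<in> borel_measurable M" and "S \<in> measurable M (count_space UNIV)" and "Y \<in> borel_measurable M"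
    and "\<forall>\<omega>\<in>space M. S \<omega> \<in> {1..K}"
    and "K \<ge> 2" and "L \<ge> 1" and "B > 0" and "\<beta> > 0" and "\<alpha> > 0"
    and "\<forall>s\<in>{1..K}. pS M S s > 0"
    and "is_cond_prob M X S K \<tau>"
    and "\<forall>s\<in>{1..K}. 0 \<le> \<epsilon> s \<and> \<epsilon> s \<le> 1"
    and "\<eta>h \<in> borel_measurable borel" and "integrable M (\<lambda>\<omega>. (\<eta>h (X \<omega>))\<^sup>2)"
    and "\<forall>s\<in>{1..K}. (\<lambda>x. \<tau>h x s) \<in> borel_measurable borel \<and> (\<forall>x. 0 \<le> \<tau>h x s \<and> \<tau>h x s \<le> 1)"
    and "\<forall>l\<in>grid L. \<forall>s\<in>{1..K}. \<Lambda> l s \<ge> 0 \<and> V l s \<ge> 0"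
  shows "sqrt (\<Sum>l\<in>grid L. \<Sum>s\<in>{1..K}.
            (max 0 (unfair M X S (pihat K B L \<beta> \<eta>h (tfun (pS M S) \<tau>h) \<Lambda> V) s l - \<epsilon> s))\<^sup>2)
         \<le> gradmap_norm K L (Fhat M X K B L \<beta> \<epsilon> \<eta>h (tfun (pS M S) \<tau>h)) \<alpha> \<Lambda> V
           + sqrt (\<integral>\<omega>. (\<Sum>s\<in>{1..K}. (tfun (pS M S) \<tau>h (X \<omega>) s - tfun (pS M S) \<tau> (X \<omega>) s)\<^sup>2) \<partial>M)"
proof -
  interpret prob_space M by (rule assms(1))
  note Xm[measurable] = assms(2) and Sm[measurable] = assms(3) and \<eta>m[measurable] = assms(14)
  define G where "G = grid L"
  have G: "finite G" "G \<noteq> {}" unfolding G_def grid_def by auto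
  define p where "p = pS M S"
  have ppos: "p s > 0" if "s \<in> {1..K}" for s using assms(11) that unfolding p_def by auto
  define th where "th = tfun p \<tau>h"
  define tt where "tt = tfun p \<tau>"
  have \<tau>m: "(\<lambda>x. \<tau> x s) \<in> borel_measurable borel" and \<tau>b: "0 \<le> \<tau> x s" "\<tau> x s \<le> 1"
    if "s \<in> {1..K}" for s x using assms(12) that unfolding is_cond_prob_def by auto
  have \<tau>hm: "(\<lambda>x. \<tau>h x s) \<in> borel_measurable borel" and \<tau>hb: "0 \<le> \<tau>h x s" "\<tau>h x s \<le> 1"
    if "s \<in> {1..K}" for s x using assms(16) that by auto
  have thM: "(\<lambda>x. th x s) \<in> borel_measurable borel" if "s \<in> {1..K}" for s
  proof -
    note [measurable] = \<tau>hm[OF that]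
    show ?thesis unfolding th_def tfun_def by measurable
  qed
  have ttm: "(\<lambda>x. tt x s) \<in> borel_measurable borel" if "s \<in> {1..K}" for s
  proof -
    note [measurable] = \<tau>m[OF that]
    show ?thesis unfolding tt_def tfun_def by measurable
  qed
  have tfb: "\<bar>tfun p f x s\<bar> \<le> 1 + 1 / p s" if "s \<in> {1..K}" "0 \<le> f x s" "f x s \<le> 1" for s x and f :: "'x \<Rightarrow> nat \<Rightarrow> real"
  proof -
    have "0 \<le> f x s / p s" using that ppos[OF that(1)] by simp
    moreover have "f x s / p s \<le> 1 / p s" using that ppos[OF that(1)] by (simp add: divide_right_mono)
    moreover have "0 < 1 / p s" using ppos[OF that(1)] by simp
    ultimately show ?thesis unfolding tfun_def by (simp add: abs_le_iff)
  qed
  have thb: "\<bar>th x s\<bar> \<le> 1 + 1 / p s" if "s \<in> {1..K}" for s x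
    unfolding th_def using tfb[of s \<tau>h x, OF that \<tau>hb[OF that]] by simp
  have ttb: "\<bar>tt x s\<bar> \<le> 1 + 1 / p s" if "s \<in> {1..K}" for s x
    unfolding tt_def using tfb[of s \<tau> x, OF that \<tau>b[OF that]] by simp
  define w where "w x j = score K B L \<eta>h th \<Lambda> V x j" for x j
  have wm[measurable]: "(\<lambda>x. w x j) \<in> borel_measurable borel" for j
  proof -
    have "(\<lambda>x. \<Sum>s\<in>{1..K}. (\<Lambda> j s - V j s) * th x s) \<in> borel_measurable borel"
      by (intro borel_measurable_sum borel_measurable_times borel_measurable_const thM) auto
    note [measurable] = this
    show ?thesis unfolding w_def score_def by measurable
  qed
  have wXm[measurable]: "(\<lambda>\<omega>. w (X \<omega>) j) \<in> borel_measurable M" for j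
    by (rule measurable_compose[OF Xm wm])
  define \<pi> where "\<pi> = pihat K B L \<beta> \<eta>h th \<Lambda> V"
  have \<pi>_eq: "\<pi> x l = softmax G (\<lambda>j. \<beta> * w x j) l" for x l
    unfolding \<pi>_def pihat_def w_def G_def ..
  have \<pi>m[measurable]: "(\<lambda>x. \<pi> x l) \<in> borel_measurable borel" for l
    unfolding \<pi>_eq softmax_def by measurable
  have \<pi>b: "0 \<le> \<pi> x l" "\<pi> x l \<le> 1" if "l \<in> G" for x l
    unfolding \<pi>_eq using G that by (auto simp: softmax_nonneg softmax_le1)
  have \<pi>sum: "(\<Sum>l\<in>G. \<pi> x l) = 1" for x unfolding \<pi>_eq using G by (rule softmax_sum)
  have LSEm[measurable]: "(\<lambda>\<omega>. LSE \<beta> G (w (X \<omega>))) \<in> borel_measurable M"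
    unfolding LSE_def by measurable
  have bint: "integrable M f" if "f \<in> borel_measurable M" "\<And>\<omega>. \<bar>f \<omega>\<bar> \<le> Bd" for f :: "'w \<Rightarrow> real" and Bd
    using that by (intro integrable_const_bound[where B=Bd]) auto
  define r where "r j = real_of_int j * B / real L" for j :: int
  define Cw where "Cw j = (\<Sum>s\<in>{1..K}. \<bar>\<Lambda> j s - V j s\<bar> * (1 + 1 / p s))" for j
  have wb: "\<bar>w x j\<bar> \<le> Cw j + 2 * (\<eta>h x)\<^sup>2 + 2 * (r j)\<^sup>2" for x j
  proof -
    have "\<bar>\<Sum>s\<in>{1..K}. (\<Lambda> j s - V j s) * th x s\<bar> \<le> (\<Sum>s\<in>{1..K}. \<bar>(\<Lambda> j s - V j s) * th x s\<bar>)"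
      by (rule sum_abs)
    also have "\<dots> \<le> Cw j" unfolding Cw_def
      by (intro sum_mono) (auto simp: abs_mult intro!: mult_left_mono thb)
    finally have 1: "\<bar>\<Sum>s\<in>{1..K}. (\<Lambda> j s - V j s) * th x s\<bar> \<le> Cw j" .
    have "(\<eta>h x - r j)\<^sup>2 + (\<eta>h x + r j)\<^sup>2 = 2 * (\<eta>h x)\<^sup>2 + 2 * (r j)\<^sup>2"
      by (simp add: power2_eq_square algebra_simps)
    hence 2: "(\<eta>h x - r j)\<^sup>2 \<le> 2 * (\<eta>h x)\<^sup>2 + 2 * (r j)\<^sup>2"
      using zero_le_power2[of "\<eta>h x + r j"] by linarith
    have 3: "0 \<le> (\<eta>h x - r j)\<^sup>2" by simp
    have "w x j = (\<Sum>s\<in>{1..K}. (\<Lambda> j s - V j s) * th x s) - (\<eta>h x - r j)\<^sup>2"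
      unfolding w_def score_def r_def ..
    thus ?thesis using 1 2 3 by linarith
  qed
  define bf where "bf \<omega> = (\<Sum>j\<in>G. Cw j + 2 * (\<eta>h (X \<omega>))\<^sup>2 + 2 * (r j)\<^sup>2) + ln (real (card G)) / \<beta>" for \<omega>
  have bfi: "integrable M bf" unfolding bf_def using assms(15)
    by (auto intro!: Bochner_Integration.integrable_add integrable_sum integrable_mult_right)
  have int0: "integrable M (\<lambda>\<omega>. LSE \<beta> G (w (X \<omega>)))"
  proof (rule Bochner_Integration.integrable_bound[OF bfi LSEm], intro AE_I2)
    fix \<omega>
    have "\<bar>LSE \<beta> G (w (X \<omega>))\<bar> \<le> (\<Sum>j\<in>G. \<bar>w (X \<omega>) j\<bar>) + ln (real (card G)) / \<beta>"
      by (rule LSE_abs[OF G assms(9)])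
    also have "\<dots> \<le> bf \<omega>" unfolding bf_def by (intro add_right_mono sum_mono wb)
    finally show "norm (LSE \<beta> G (w (X \<omega>))) \<le> norm (bf \<omega>)" by simp
  qed
  define Fh where "Fh = Fhat M X K B L \<beta> \<epsilon> \<eta>h th"
  define a where "a l s = (\<integral>\<omega>. \<pi> (X \<omega>) l * th (X \<omega>) s \<partial>M)" for l s
  define b where "b l s = (\<integral>\<omega>. \<pi> (X \<omega>) l * tt (X \<omega>) s \<partial>M)" for l s
  define c0 where "c0 = (\<Sum>l'\<in>G. \<Sum>s'\<in>{1..K}. (\<Lambda> l' s' + V l' s') * \<epsilon> s')"
  have Pm: "(\<lambda>\<omega>. softmax G (\<lambda>j. \<beta> * w (X \<omega>) j) l) \<in> borel_measurable M" for l
    using measurable_compose[OF Xm \<pi>m[of l]] by (simp add: \<pi>_eq)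
  have gL: "gradL Fh \<Lambda> V l s = \<epsilon> s + a l s" if ls: "l \<in> G" "s \<in> {1..K}" for l s
  proof -
    have sc: "score K B L \<eta>h th (upd \<Lambda> l s h) V x = (\<lambda>j. w x j + (if j = l then h * th x s else 0))" for x h
      unfolding w_def score_def
      apply (rule ext)
      apply (subst upd_sum_L[where A="{1..K}"])
      using ls by (auto simp: algebra_simps)
    have epsE: "(\<Sum>l'\<in>G. \<Sum>s'\<in>{1..K}. (upd \<Lambda> l s h l' s' + V l' s') * \<epsilon> s') = c0 + h * \<epsilon> s" for h
      unfolding c0_def by (rule upd_eps_L[OF G(1) _ ls]) simp
    have Feq: "(\<lambda>h. Fh (upd \<Lambda> l s h) V) = (\<lambda>h. (\<integral>\<omega>. LSE \<beta> G (\<lambda>j. w (X \<omega>) j + (if j = l then h * th (X \<omega>) s else 0)) \<partial>M) + (c0 + h * \<epsilon> s))"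
      unfolding Fh_def Fhat_def G_def[symmetric] by (rule ext) (simp only: sc epsE)
    have D1: "((\<lambda>h. \<integral>\<omega>. LSE \<beta> G (\<lambda>j. w (X \<omega>) j + (if j = l then h * th (X \<omega>) s else 0)) \<partial>M)
          has_real_derivative (\<integral>\<omega>. softmax G (\<lambda>j. \<beta> * w (X \<omega>) j) l * th (X \<omega>) s \<partial>M)) (at 0)"
      by (rule deriv_int_lse[where C="1 + 1 / p s", OF assms(1) G(1) ls(1) assms(9) Pm
            measurable_compose[OF Xm thM[OF ls(2)]] thb[OF ls(2)] int0])
    have D2: "((\<lambda>h. c0 + h * \<epsilon> s) has_real_derivative \<epsilon> s) (at 0)"
      by (auto intro!: derivative_eq_intros)
    have ae: "(\<integral>\<omega>. softmax G (\<lambda>j. \<beta> * w (X \<omega>) j) l * th (X \<omega>) s \<partial>M) = a l s"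
      unfolding a_def \<pi>_eq ..
    have "((\<lambda>h. Fh (upd \<Lambda> l s h) V) has_real_derivative (a l s + \<epsilon> s)) (at 0)"
      unfolding Feq using DERIV_add[OF D1 D2] ae by simp
    hence "deriv (\<lambda>h. Fh (upd \<Lambda> l s h) V) 0 = a l s + \<epsilon> s" by (rule DERIV_imp_deriv)
    thus ?thesis unfolding gradL_def by simp
  qed
  have gV: "gradV Fh \<Lambda> V l s = \<epsilon> s - a l s" if ls: "l \<in> G" "s \<in> {1..K}" for l s
  proof -
    have sc: "score K B L \<eta>h th \<Lambda> (upd V l s h) x = (\<lambda>j. w x j + (if j = l then h * (- th x s) else 0))" for x h
      unfolding w_def score_def
      apply (rule ext)
      apply (subst upd_sum_V[where A="{1..K}"])
      using ls by (auto simp: algebra_simps)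
    have epsE: "(\<Sum>l'\<in>G. \<Sum>s'\<in>{1..K}. (\<Lambda> l' s' + upd V l s h l' s') * \<epsilon> s') = c0 + h * \<epsilon> s" for h
      unfolding c0_def by (rule upd_eps_V[OF G(1) _ ls]) simp
    have Feq: "(\<lambda>h. Fh \<Lambda> (upd V l s h)) = (\<lambda>h. (\<integral>\<omega>. LSE \<beta> G (\<lambda>j. w (X \<omega>) j + (if j = l then h * (- th (X \<omega>) s) else 0)) \<partial>M) + (c0 + h * \<epsilon> s))"
      unfolding Fh_def Fhat_def G_def[symmetric] by (rule ext) (simp only: sc epsE)
    have cm: "(\<lambda>\<omega>. - th (X \<omega>) s) \<in> borel_measurable M"
      using measurable_compose[OF Xm thM[OF ls(2)]] by simp
    have D1: "((\<lambda>h. \<integral>\<omega>. LSE \<beta> G (\<lambda>j. w (X \<omega>) j + (if j = l then h * (- th (X \<omega>) s) else 0)) \<partial>M)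
          has_real_derivative (\<integral>\<omega>. softmax G (\<lambda>j. \<beta> * w (X \<omega>) j) l * (- th (X \<omega>) s) \<partial>M)) (at 0)"
      by (rule deriv_int_lse[where C="1 + 1 / p s", OF assms(1) G(1) ls(1) assms(9) Pm cm _ int0])
         (simp add: thb[OF ls(2)])
    have D2: "((\<lambda>h. c0 + h * \<epsilon> s) has_real_derivative \<epsilon> s) (at 0)"
      by (auto intro!: derivative_eq_intros)
    have ae: "(\<integral>\<omega>. softmax G (\<lambda>j. \<beta> * w (X \<omega>) j) l * (- th (X \<omega>) s) \<partial>M) = - a l s"
      unfolding a_def \<pi>_eq by simp
    have "((\<lambda>h. Fh \<Lambda> (upd V l s h)) has_real_derivative (- a l s + \<epsilon> s)) (at 0)"
      unfolding Feq using DERIV_add[OF D1 D2] ae by simp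
    hence "deriv (\<lambda>h. Fh \<Lambda> (upd V l s h)) 0 = - a l s + \<epsilon> s" by (rule DERIV_imp_deriv)
    thus ?thesis unfolding gradV_def by simp
  qed
  have \<pi>Xm: "(\<lambda>\<omega>. \<pi> (X \<omega>) l) \<in> borel_measurable M" for l
    by (rule measurable_compose[OF Xm \<pi>m])
  have thXm: "(\<lambda>\<omega>. th (X \<omega>) s) \<in> borel_measurable M" if "s \<in> {1..K}" for s
    by (rule measurable_compose[OF Xm thM[OF that]])
  have ttXm: "(\<lambda>\<omega>. tt (X \<omega>) s) \<in> borel_measurable M" if "s \<in> {1..K}" for s
    by (rule measurable_compose[OF Xm ttm[OF that]])
  have \<tau>Xm: "(\<lambda>\<omega>. \<tau> (X \<omega>) s) \<in> borel_measurable M" if "s \<in> {1..K}" for s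
    by (rule measurable_compose[OF Xm \<tau>m[OF that]])
  have mulb: "\<bar>x * y\<bar> \<le> C" if "0 \<le> x" "x \<le> 1" "\<bar>y\<bar> \<le> C" for x y C :: real
  proof -
    have "\<bar>x\<bar> * \<bar>y\<bar> \<le> 1 * C" using that by (intro mult_mono) auto
    thus ?thesis by (simp add: abs_mult)
  qed
  have i\<pi>: "integrable M (\<lambda>\<omega>. \<pi> (X \<omega>) l)" if "l \<in> G" for l
    by (rule bint[of _ 1, OF \<pi>Xm]) (simp add: \<pi>b[OF that])
  have i\<pi>th: "integrable M (\<lambda>\<omega>. \<pi> (X \<omega>) l * th (X \<omega>) s)" if "l \<in> G" "s \<in> {1..K}" for l s
    by (rule bint[of _ "1 + 1 / p s"]) (auto intro!: mulb borel_measurable_times \<pi>Xm thXm that \<pi>b thb)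
  have i\<pi>tt: "integrable M (\<lambda>\<omega>. \<pi> (X \<omega>) l * tt (X \<omega>) s)" if "l \<in> G" "s \<in> {1..K}" for l s
    by (rule bint[of _ "1 + 1 / p s"]) (auto intro!: mulb borel_measurable_times \<pi>Xm ttXm that \<pi>b ttb)
  have i\<pi>\<tau>: "integrable M (\<lambda>\<omega>. \<pi> (X \<omega>) l * \<tau> (X \<omega>) s)" if "l \<in> G" "s \<in> {1..K}" for l s
  proof (rule bint[of _ "1"])
    show "(\<lambda>\<omega>. \<pi> (X \<omega>) l * \<tau> (X \<omega>) s) \<in> borel_measurable M"
      by (intro borel_measurable_times \<pi>Xm \<tau>Xm that)
    fix \<omega>
    have "\<bar>\<tau> (X \<omega>) s\<bar> \<le> 1" using \<tau>b[OF that(2), of "X \<omega>"] by simp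
    thus "\<bar>\<pi> (X \<omega>) l * \<tau> (X \<omega>) s\<bar> \<le> 1" by (intro mulb \<pi>b that)
  qed
  have uf: "unfair M X S \<pi> s l = \<bar>b l s\<bar>" if ls: "l \<in> G" "s \<in> {1..K}" for l s
  proof -
    have ce: "(\<integral>\<omega>. \<pi> (X \<omega>) l * \<tau> (X \<omega>) s \<partial>M) = (\<integral>\<omega>. \<pi> (X \<omega>) l * indicator {\<omega>' \<in> space M. S \<omega>' = s} \<omega> \<partial>M)"
      by (rule cond_prob_integral[OF assms(1) Xm Sm assms(12) ls(2) \<pi>m])
    have "b l s = (\<integral>\<omega>. \<pi> (X \<omega>) l - \<pi> (X \<omega>) l * \<tau> (X \<omega>) s / p s \<partial>M)"
      unfolding b_def tt_def tfun_def by (simp add: right_diff_distrib)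
    also have "\<dots> = (\<integral>\<omega>. \<pi> (X \<omega>) l \<partial>M) - (\<integral>\<omega>. \<pi> (X \<omega>) l * \<tau> (X \<omega>) s / p s \<partial>M)"
      by (rule Bochner_Integration.integral_diff[OF i\<pi>[OF ls(1)] integrable_divide_zero[OF i\<pi>\<tau>[OF ls]]])
    also have "\<dots> = (\<integral>\<omega>. \<pi> (X \<omega>) l \<partial>M) - (\<integral>\<omega>. \<pi> (X \<omega>) l * \<tau> (X \<omega>) s \<partial>M) / p s"
      by simp
    finally have "b l s = (\<integral>\<omega>. \<pi> (X \<omega>) l \<partial>M) - (\<integral>\<omega>. \<pi> (X \<omega>) l * indicator {\<omega>' \<in> space M. S \<omega>' = s} \<omega> \<partial>M) / p s"
      unfolding ce .
    thus ?thesis unfolding unfair_def p_def[symmetric] by simp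
  qed
  define D where "D x s = th x s - tt x s" for x s
  have Db: "\<bar>D x s\<bar> \<le> 2 * (1 + 1 / p s)" if "s \<in> {1..K}" for x s
    unfolding D_def using thb[OF that, of x] ttb[OF that, of x] using abs_triangle_ineq4[of "th x s" "tt x s"] unfolding mult_2 by linarith
  have DXm: "(\<lambda>\<omega>. D (X \<omega>) s) \<in> borel_measurable M" if "s \<in> {1..K}" for s
    unfolding D_def using thXm[OF that] ttXm[OF that] by measurable
  have i\<pi>D2: "integrable M (\<lambda>\<omega>. \<pi> (X \<omega>) l * (D (X \<omega>) s)\<^sup>2)" if "l \<in> G" "s \<in> {1..K}" for l s
  proof (rule bint[of _ "(2 * (1 + 1 / p s))\<^sup>2"])
    show "(\<lambda>\<omega>. \<pi> (X \<omega>) l * (D (X \<omega>) s)\<^sup>2) \<in> borel_measurable M"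
      using \<pi>Xm[of l] DXm[OF that(2)] by measurable
    fix \<omega>
    have "\<bar>(D (X \<omega>) s)\<^sup>2\<bar> \<le> (2 * (1 + 1 / p s))\<^sup>2"
      using Db[OF that(2), of "X \<omega>"] by (simp add: abs_le_square_iff power2_le_iff_abs_le)
    thus "\<bar>\<pi> (X \<omega>) l * (D (X \<omega>) s)\<^sup>2\<bar> \<le> (2 * (1 + 1 / p s))\<^sup>2"
      by (intro mulb \<pi>b that)
  qed
  have dbound: "(a l s - b l s)\<^sup>2 \<le> (\<integral>\<omega>. \<pi> (X \<omega>) l * (D (X \<omega>) s)\<^sup>2 \<partial>M)" if ls: "l \<in> G" "s \<in> {1..K}" for l s
  proof -
    define Z where "Z \<omega> = \<pi> (X \<omega>) l * D (X \<omega>) s" for \<omega>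
    have Zm: "Z \<in> borel_measurable M" unfolding Z_def using \<pi>Xm[of l] DXm[OF ls(2)] by measurable
    have Zb: "\<bar>Z \<omega>\<bar> \<le> 2 * (1 + 1 / p s)" for \<omega> unfolding Z_def by (intro mulb \<pi>b Db ls)
    have iZ: "integrable M Z" by (rule bint[OF Zm Zb])
    have iZ2: "integrable M (\<lambda>\<omega>. (Z \<omega>)\<^sup>2)"
    proof (rule bint[of _ "(2 * (1 + 1 / p s))\<^sup>2"])
      show "(\<lambda>\<omega>. (Z \<omega>)\<^sup>2) \<in> borel_measurable M" using Zm by measurable
      fix \<omega> show "\<bar>(Z \<omega>)\<^sup>2\<bar> \<le> (2 * (1 + 1 / p s))\<^sup>2"
        using Zb[of \<omega>] by (simp add: abs_le_square_iff power2_le_iff_abs_le)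
    qed
    have "a l s - b l s = (\<integral>\<omega>. Z \<omega> \<partial>M)"
      unfolding a_def b_def Z_def D_def
      by (subst Bochner_Integration.integral_diff[OF i\<pi>th[OF ls] i\<pi>tt[OF ls], symmetric])
         (simp add: right_diff_distrib)
    hence "(a l s - b l s)\<^sup>2 \<le> (\<integral>\<omega>. (Z \<omega>)\<^sup>2 \<partial>M)" using sq_int_le[OF iZ iZ2] by simp
    also have "\<dots> \<le> (\<integral>\<omega>. \<pi> (X \<omega>) l * (D (X \<omega>) s)\<^sup>2 \<partial>M)"
    proof (rule integral_mono[OF iZ2 i\<pi>D2[OF ls]])
      fix \<omega>
      have "(\<pi> (X \<omega>) l)\<^sup>2 \<le> \<pi> (X \<omega>) l"
        using \<pi>b[OF ls(1), of "X \<omega>"] by (simp add: power2_eq_square mult_left_le_one_le)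
      hence "(\<pi> (X \<omega>) l)\<^sup>2 * (D (X \<omega>) s)\<^sup>2 \<le> \<pi> (X \<omega>) l * (D (X \<omega>) s)\<^sup>2"
        by (intro mult_right_mono) auto
      thus "(Z \<omega>)\<^sup>2 \<le> \<pi> (X \<omega>) l * (D (X \<omega>) s)\<^sup>2" unfolding Z_def by (simp add: power_mult_distrib)
    qed
    finally show ?thesis .
  qed
  have dsum: "(\<Sum>l\<in>G. \<Sum>s\<in>{1..K}. \<bar>a l s - b l s\<bar>\<^sup>2) \<le> (\<integral>\<omega>. (\<Sum>s\<in>{1..K}. (D (X \<omega>) s)\<^sup>2) \<partial>M)"
  proof -
    have "(\<Sum>l\<in>G. \<Sum>s\<in>{1..K}. \<bar>a l s - b l s\<bar>\<^sup>2) \<le> (\<Sum>l\<in>G. \<Sum>s\<in>{1..K}. (\<integral>\<omega>. \<pi> (X \<omega>) l * (D (X \<omega>) s)\<^sup>2 \<partial>M))"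
      by (intro sum_mono) (simp add: dbound)
    also have "\<dots> = (\<integral>\<omega>. (\<Sum>l\<in>G. \<Sum>s\<in>{1..K}. \<pi> (X \<omega>) l * (D (X \<omega>) s)\<^sup>2) \<partial>M)"
    proof -
      have "(\<Sum>l\<in>G. \<Sum>s\<in>{1..K}. (\<integral>\<omega>. \<pi> (X \<omega>) l * (D (X \<omega>) s)\<^sup>2 \<partial>M))
          = (\<Sum>l\<in>G. (\<integral>\<omega>. (\<Sum>s\<in>{1..K}. \<pi> (X \<omega>) l * (D (X \<omega>) s)\<^sup>2) \<partial>M))"
        by (intro sum.cong refl Bochner_Integration.integral_sum[symmetric] i\<pi>D2) auto
      also have "\<dots> = (\<integral>\<omega>. (\<Sum>l\<in>G. \<Sum>s\<in>{1..K}. \<pi> (X \<omega>) l * (D (X \<omega>) s)\<^sup>2) \<partial>M)"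
      proof -
        have ii: "integrable M (\<lambda>\<omega>. \<Sum>s\<in>{1..K}. \<pi> (X \<omega>) l * (D (X \<omega>) s)\<^sup>2)" if "l \<in> G" for l
          by (rule Bochner_Integration.integrable_sum) (rule i\<pi>D2[OF that])
        show ?thesis by (subst Bochner_Integration.integral_sum[OF ii]) simp_all
      qed
      finally show ?thesis .
    qed
    also have "\<dots> = (\<integral>\<omega>. (\<Sum>s\<in>{1..K}. (D (X \<omega>) s)\<^sup>2) \<partial>M)"
    proof (intro Bochner_Integration.integral_cong refl)
      fix \<omega>
      have "(\<Sum>l\<in>G. \<Sum>s\<in>{1..K}. \<pi> (X \<omega>) l * (D (X \<omega>) s)\<^sup>2) = (\<Sum>s\<in>{1..K}. \<Sum>l\<in>G. \<pi> (X \<omega>) l * (D (X \<omega>) s)\<^sup>2)"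
        by (rule sum.swap)
      also have "\<dots> = (\<Sum>s\<in>{1..K}. (\<Sum>l\<in>G. \<pi> (X \<omega>) l) * (D (X \<omega>) s)\<^sup>2)"
        by (simp add: sum_distrib_right)
      also have "\<dots> = (\<Sum>s\<in>{1..K}. (D (X \<omega>) s)\<^sup>2)" by (simp add: \<pi>sum)
      finally show "(\<Sum>l\<in>G. \<Sum>s\<in>{1..K}. \<pi> (X \<omega>) l * (D (X \<omega>) s)\<^sup>2) = (\<Sum>s\<in>{1..K}. (D (X \<omega>) s)\<^sup>2)" .
    qed
    finally show ?thesis .
  qed
  have step1: "sqrt (\<Sum>l\<in>G. \<Sum>s\<in>{1..K}. (max 0 (unfair M X S \<pi> s l - \<epsilon> s))\<^sup>2)
      = sqrt (\<Sum>l\<in>G. \<Sum>s\<in>{1..K}. (max 0 (\<bar>b l s\<bar> - \<epsilon> s))\<^sup>2)"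
    by (intro arg_cong[where f=sqrt] sum.cong refl) (simp add: uf)
  have step2: "sqrt (\<Sum>l\<in>G. \<Sum>s\<in>{1..K}. (max 0 (\<bar>b l s\<bar> - \<epsilon> s))\<^sup>2)
      \<le> sqrt (\<Sum>l\<in>G. \<Sum>s\<in>{1..K}. (max 0 (\<bar>a l s\<bar> - \<epsilon> s))\<^sup>2) + sqrt (\<Sum>l\<in>G. \<Sum>s\<in>{1..K}. (\<bar>a l s - b l s\<bar>)\<^sup>2)"
    by (rule L2_double[OF G(1) finite_atLeastAtMost]) (auto simp: max_shift)
  have step3: "sqrt (\<Sum>l\<in>G. \<Sum>s\<in>{1..K}. (max 0 (\<bar>a l s\<bar> - \<epsilon> s))\<^sup>2) \<le> gradmap_norm K L Fh \<alpha> \<Lambda> V"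
    unfolding gradmap_norm_def G_def[symmetric]
  proof (intro real_sqrt_le_mono sum_mono)
    fix l s assume ls: "l \<in> G" "s \<in> {1..K}"
    have nn: "0 \<le> \<Lambda> l s" "0 \<le> V l s" using assms(17) ls unfolding G_def by auto
    show "(max 0 (\<bar>a l s\<bar> - \<epsilon> s))\<^sup>2 \<le> ((\<Lambda> l s - max 0 (\<Lambda> l s - \<alpha> * gradL Fh \<Lambda> V l s)) / \<alpha>)\<^sup>2
          + ((V l s - max 0 (V l s - \<alpha> * gradV Fh \<Lambda> V l s)) / \<alpha>)\<^sup>2"
      unfolding gL[OF ls] gV[OF ls] by (rule gm_scalar[OF assms(10) nn])
  qed
  have step4: "sqrt (\<Sum>l\<in>G. \<Sum>s\<in>{1..K}. (\<bar>a l s - b l s\<bar>)\<^sup>2) \<le> sqrt (\<integral>\<omega>. (\<Sum>s\<in>{1..K}. (D (X \<omega>) s)\<^sup>2) \<partial>M)"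
    using dsum by (rule real_sqrt_le_mono)
  have "sqrt (\<Sum>l\<in>G. \<Sum>s\<in>{1..K}. (max 0 (unfair M X S \<pi> s l - \<epsilon> s))\<^sup>2)
      \<le> gradmap_norm K L Fh \<alpha> \<Lambda> V + sqrt (\<integral>\<omega>. (\<Sum>s\<in>{1..K}. (D (X \<omega>) s)\<^sup>2) \<partial>M)"
    using step1 step2 step3 step4 by linarith
  thus ?thesis unfolding G_def p_def[symmetric] th_def[symmetric] tt_def[symmetric] \<pi>_def[symmetric] Fh_def[symmetric] D_def .
qed

end
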